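(* Let $G$ be a finite semi-3-abelian 3-group, let $x\in\Omega_{1}(G)$, let $k\ge 1$ and $g_1,\dots,g_k\in G$. Then for every permutation $\sigma$ of $\{1,\dots,k\}$, $$[x,g_{\sigma(1)},g_{\sigma(2)},\dots,g_{\sigma(k)}]=[x,g_{1},g_{2},\dots,g_{k}]^{2^{\delta(\sigma)}},$$ where $\delta(\sigma)=0$ if $\sigma$ is an even permutation and $\delta(\sigma)=1$ if $\sigma$ is odd.
   Context: A finite 3-group $G$ is semi-3-abelian if for all $a,b\in G$: $(ab)^{3}=1$ if and only if $a^{3}b^{3}=1$. $\Omega_{1}(G)=\langle g\in G : g^{3}=1\rangle$. Commutators: $[x,y]=x^{-1}y^{-1}xy$, and left-normed $[x_1,\dots,x_n]=[[x_1,\dots,x_{n-1}],x_n]$. *)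

theory Defs
  imports "HOL-Algebra.Algebra" "HOL-Combinatorics.Permutations"
begin

definition comm :: "('a, 'b) monoid_scheme \<Rightarrow> 'a \<Rightarrow> 'a \<Rightarrow> 'a" where
  "comm G x y = inv\<^bsub>G\<^esub> x \<otimes>\<^bsub>G\<^esub> inv\<^bsub>G\<^esub> y \<otimes>\<^bsub>G\<^esub> x \<otimes>\<^bsub>G\<^esub> y"

definition lcomm :: "('a, 'b) monoid_scheme \<Rightarrow> 'a \<Rightarrow> 'a list \<Rightarrow> 'a" where
  "lcomm G x ys = foldl (comm G) x ys"

definition p_group :: "nat \<Rightarrow> ('a, 'b) monoid_scheme \<Rightarrow> bool" where
  "p_group p G \<longleftrightarrow> group G \<and> finite (carrier G) \<and> (\<exists>n. order G = p ^ n)"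

definition semi_3_abelian :: "('a, 'b) monoid_scheme \<Rightarrow> bool" where
  "semi_3_abelian G \<longleftrightarrow> (\<forall>a\<in>carrier G. \<forall>b\<in>carrier G.
     (a \<otimes>\<^bsub>G\<^esub> b) [^]\<^bsub>G\<^esub> (3::nat) = \<one>\<^bsub>G\<^esub> \<longleftrightarrow>
     a [^]\<^bsub>G\<^esub> (3::nat) \<otimes>\<^bsub>G\<^esub> b [^]\<^bsub>G\<^esub> (3::nat) = \<one>\<^bsub>G\<^esub>)"

definition Omega1 :: "('a, 'b) monoid_scheme \<Rightarrow> 'a set" where
  "Omega1 G = generate G {g \<in> carrier G. g [^]\<^bsub>G\<^esub> (3::nat) = \<one>\<^bsub>G\<^esub>}"

end

theory Submission
  imports Defs
begin

definition cj :: "('a, 'b) monoid_scheme \<Rightarrow> 'a \<Rightarrow> 'a \<Rightarrow> 'a" where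
  "cj G t y = inv\<^bsub>G\<^esub> t \<otimes>\<^bsub>G\<^esub> y \<otimes>\<^bsub>G\<^esub> t"

locale semi3 = group G for G (structure) +
  assumes semi: "semi_3_abelian G"
begin

definition S3 where "S3 = {g \<in> carrier G. g [^] (3::nat) = \<one>}"

lemma inv_cancel_l: "x \<in> carrier G \<Longrightarrow> y \<in> carrier G \<Longrightarrow> inv x \<otimes> (x \<otimes> y) = y"
  by (metis inv_closed l_inv l_one m_assoc)
lemma inv_cancel_r: "x \<in> carrier G \<Longrightarrow> y \<in> carrier G \<Longrightarrow> x \<otimes> (inv x \<otimes> y) = y"
  by (metis inv_closed r_inv l_one m_assoc)

lemmas wsimps = m_assoc inv_mult_group inv_cancel_l inv_cancel_r

lemma pow3: "z \<in> carrier G \<Longrightarrow> z [^] (3::nat) = z \<otimes> z \<otimes> z"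
  by (simp add: numeral_3_eq_3)

lemma cj_closed[simp]: "t \<in> carrier G \<Longrightarrow> y \<in> carrier G \<Longrightarrow> cj G t y \<in> carrier G"
  by (simp add: cj_def)

lemma S3_sub: "subgroup S3 G"
proof (rule subgroupI)
  show "S3 \<subseteq> carrier G" by (auto simp: S3_def)
  have "\<one> \<in> S3" by (simp add: S3_def)
  then show "S3 \<noteq> {}" by blast
  fix a assume a: "a \<in> S3"
  then have ac: "a \<in> carrier G" and "a [^] (3::nat) = \<one>" by (auto simp: S3_def)
  then have a3: "a \<otimes> a \<otimes> a = \<one>" using pow3[OF ac] by simp
  have "inv a \<otimes> inv a \<otimes> inv a = inv (a \<otimes> a \<otimes> a)" using ac by (simp add: wsimps)
  then have "inv a [^] (3::nat) = \<one>" using ac a3 pow3[of "inv a"] by simp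
  then show "inv a \<in> S3" using ac by (simp add: S3_def)
next
  fix a b assume a: "a \<in> S3" and b: "b \<in> S3"
  then have ac: "a \<in> carrier G" and a3: "a [^] (3::nat) = \<one>"
    and bc: "b \<in> carrier G" and b3: "b [^] (3::nat) = \<one>" by (auto simp: S3_def)
  have "a [^] (3::nat) \<otimes> b [^] (3::nat) = \<one>" using a3 b3 by simp
  then have "(a \<otimes> b) [^] (3::nat) = \<one>" using semi ac bc unfolding semi_3_abelian_def by blast
  then show "a \<otimes> b \<in> S3" using ac bc by (simp add: S3_def)
qed

lemma S3_carrier: "y \<in> S3 \<Longrightarrow> y \<in> carrier G" by (simp add: S3_def)

lemma F1: assumes y: "y \<in> S3" and t: "t \<in> carrier G"
  shows "y \<otimes> cj G t y \<otimes> cj G t (cj G t y) = \<one>"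
proof -
  have yc: "y \<in> carrier G" using y S3_carrier by blast
  have y3: "y \<otimes> y \<otimes> y = \<one>" using y pow3[OF yc] by (simp add: S3_def)
  have "(t \<otimes> (y \<otimes> inv t)) [^] (3::nat) = \<one>"
  proof -
    have "(t \<otimes> (y \<otimes> inv t)) [^] (3::nat) = t \<otimes> (y \<otimes> y \<otimes> y) \<otimes> inv t"
      using yc t by (simp add: pow3 wsimps)
    then show ?thesis using y3 t by simp
  qed
  then have E: "t [^] (3::nat) \<otimes> (y \<otimes> inv t) [^] (3::nat) = \<one>"
    using semi yc t unfolding semi_3_abelian_def by auto
  have "y \<otimes> cj G t y \<otimes> cj G t (cj G t y) = inv t \<otimes> inv t \<otimes> inv t \<otimes> (t [^] (3::nat) \<otimes> (y \<otimes> inv t) [^] (3::nat)) \<otimes> t \<otimes> t \<otimes> t"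
    using yc t by (simp add: cj_def pow3 wsimps)
  also have "\<dots> = \<one>" unfolding E using t by (simp add: wsimps)
  finally show ?thesis .
qed


lemma cj_mult: "t \<in> carrier G \<Longrightarrow> a \<in> carrier G \<Longrightarrow> b \<in> carrier G \<Longrightarrow> cj G t (a \<otimes> b) = cj G t a \<otimes> cj G t b"
  by (simp add: cj_def wsimps)
lemma cj_inv: "t \<in> carrier G \<Longrightarrow> a \<in> carrier G \<Longrightarrow> cj G t (inv a) = inv (cj G t a)"
  by (simp add: cj_def wsimps)
lemma cj_cj: "t \<in> carrier G \<Longrightarrow> s \<in> carrier G \<Longrightarrow> y \<in> carrier G \<Longrightarrow> cj G t (cj G s y) = cj G (s \<otimes> t) y"
  by (simp add: cj_def wsimps)
lemma cj_one1[simp]: "y \<in> carrier G \<Longrightarrow> cj G \<one> y = y"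
  by (simp add: cj_def)
lemma cj_one2[simp]: "t \<in> carrier G \<Longrightarrow> cj G t \<one> = \<one>"
  by (simp add: cj_def)
lemma cj_invt: "t \<in> carrier G \<Longrightarrow> y \<in> carrier G \<Longrightarrow> cj G (inv t) (cj G t y) = y"
  by (simp add: cj_def wsimps)
lemma cj_S3: assumes "t \<in> carrier G" "y \<in> S3" shows "cj G t y \<in> S3"
proof -
  have yc: "y \<in> carrier G" using assms S3_carrier by blast
  have "y [^] (3::nat) = \<one>" using assms by (simp add: S3_def)
  then have "y \<otimes> y \<otimes> y = \<one>" using pow3[OF yc] by simp
  moreover have "cj G t y \<otimes> cj G t y \<otimes> cj G t y = cj G t (y \<otimes> y \<otimes> y)"
    using assms yc by (simp add: cj_mult)
  ultimately show ?thesis using assms yc by (simp add: S3_def pow3)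
qed

lemma F2: assumes y: "y \<in> S3" and t: "t \<in> carrier G"
  shows "y \<otimes> cj G t y = cj G t y \<otimes> y"
proof -
  have yc: "y \<in> carrier G" using y S3_carrier by blast
  define b where "b = cj G t y"
  define c where "c = cj G t b"
  have bS: "b \<in> S3" and cS: "c \<in> S3" using y t cj_S3 by (auto simp: b_def c_def)
  have bc: "b \<in> carrier G" and cc: "c \<in> carrier G" using bS cS S3_carrier by auto
  have it: "inv t \<in> carrier G" using t by simp
  have 1: "y \<otimes> b \<otimes> c = \<one>" using F1[OF y t] by (simp add: b_def c_def)
  have 2: "c \<otimes> b \<otimes> y = \<one>" using F1[OF cS it] t yc
    by (simp add: c_def b_def cj_invt)
  have "inv c = y \<otimes> b" using 1 by (intro inv_equality) (auto simp: yc bc cc)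
  moreover have "inv c = b \<otimes> y"
  proof (rule inv_equality)
    show "b \<otimes> y \<otimes> c = \<one>" using 2 yc bc cc by (metis inv_comm m_assoc m_closed)
  qed (auto simp: yc bc cc)
  ultimately show ?thesis by (simp add: b_def)
qed

end

locale M3 = semi3 +
  fixes x
  assumes xS: "x \<in> S3"
begin

definition M where "M = generate G {cj G t x | t. t \<in> carrier G}"

lemma xc: "x \<in> carrier G" using xS S3_carrier by blast

lemma gens_sub: "{cj G t x | t. t \<in> carrier G} \<subseteq> S3"
  using xS cj_S3 by auto

lemma M_sub_S3: "M \<subseteq> S3"
  unfolding M_def by (rule generate_subgroup_incl[OF gens_sub S3_sub])

lemma M_carrier[simp]: "m \<in> M \<Longrightarrow> m \<in> carrier G"
  using M_sub_S3 S3_carrier by blast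

lemma M_subgroup: "subgroup M G"
  unfolding M_def by (rule generate_is_subgroup) (use gens_sub S3_carrier in blast)

lemma M_mult[simp]: "a \<in> M \<Longrightarrow> b \<in> M \<Longrightarrow> a \<otimes> b \<in> M"
  by (rule subgroup.m_closed[OF M_subgroup])
lemma M_inv[simp]: "a \<in> M \<Longrightarrow> inv a \<in> M"
  by (rule subgroup.m_inv_closed[OF M_subgroup])
lemma M_one[simp]: "\<one> \<in> M"
  by (rule subgroup.one_closed[OF M_subgroup])
lemma x_M: "x \<in> M"
proof -
  have "cj G \<one> x \<in> M" unfolding M_def by (rule generate.incl) auto
  then show ?thesis using xc by simp
qed

lemma M_cube: assumes "m \<in> M" shows "m \<otimes> m \<otimes> m = \<one>"
proof -
  have "m \<in> S3" using assms M_sub_S3 by blast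
  then have "m [^] (3::nat) = \<one>" by (simp add: S3_def)
  then show ?thesis using pow3[of m] assms by simp
qed

lemma M_cj[simp]: assumes "m \<in> M" "t \<in> carrier G" shows "cj G t m \<in> M"
  using assms(1) unfolding M_def
proof (induction m rule: generate.induct)
  case one then show ?case using assms by (simp add: generate.one)
next
  case (incl h)
  then obtain s where s: "s \<in> carrier G" "h = cj G s x" by blast
  then have "cj G t h = cj G (s \<otimes> t) x" using assms xc by (simp add: cj_cj)
  then show ?case using s assms by (auto intro!: generate.incl)
next
  case (inv h)
  then obtain s where s: "s \<in> carrier G" "h = cj G s x" by blast
  then have "cj G t (inv h) = inv (cj G (s \<otimes> t) x)" using assms xc by (simp add: cj_cj cj_inv)
  then show ?case using s assms by (auto intro!: generate.inv)
next
  case (eng h1 h2)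
  have "h1 \<in> M" "h2 \<in> M" using eng by (auto simp: M_def)
  then have "cj G t (h1 \<otimes> h2) = cj G t h1 \<otimes> cj G t h2" using assms by (simp add: cj_mult)
  then show ?case using eng by (auto intro: generate.eng)
qed

lemma comm_inv: "a \<in> carrier G \<Longrightarrow> b \<in> carrier G \<Longrightarrow> a \<otimes> b = b \<otimes> a \<Longrightarrow> inv a \<otimes> b = b \<otimes> inv a"
proof -
  assume c: "a \<in> carrier G" "b \<in> carrier G" and e: "a \<otimes> b = b \<otimes> a"
  have "inv a \<otimes> b = inv a \<otimes> (b \<otimes> a) \<otimes> inv a" using c by (simp add: m_assoc)
  also have "\<dots> = b \<otimes> inv a" unfolding e[symmetric] using c by (simp add: wsimps)
  finally show ?thesis .
qed

lemma gen_comm: assumes "s \<in> carrier G" "t \<in> carrier G"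
  shows "cj G s x \<otimes> cj G t x = cj G t x \<otimes> cj G s x"
proof -
  have u: "cj G s x \<in> S3" using assms xS cj_S3 by blast
  have "cj G t x = cj G (inv s \<otimes> t) (cj G s x)" using assms xc
    by (simp add: cj_cj m_assoc[symmetric])
  then show ?thesis using F2[OF u, of "inv s \<otimes> t"] assms by simp
qed

lemma M_comm_gen: assumes "m \<in> M" "t \<in> carrier G"
  shows "m \<otimes> cj G t x = cj G t x \<otimes> m"
  using assms(1) unfolding M_def
proof (induction m rule: generate.induct)
  case one then show ?case using assms xc by simp
next
  case (incl h)
  then show ?case using gen_comm assms by blast
next
  case (inv h)
  then obtain s where s: "s \<in> carrier G" "h = cj G s x" by blast
  then show ?case using gen_comm[OF s(1) assms(2)] comm_inv assms xc by simp
next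
  case (eng h1 h2)
  have c: "h1 \<in> carrier G" "h2 \<in> carrier G" using eng by (auto simp: M_def[symmetric])
  have "h1 \<otimes> h2 \<otimes> cj G t x = h1 \<otimes> (cj G t x \<otimes> h2)" using eng c assms xc by (simp add: m_assoc)
  also have "\<dots> = cj G t x \<otimes> (h1 \<otimes> h2)" using eng c assms xc by (simp add: m_assoc[symmetric])
  finally show ?case .
qed

lemma M_comm: assumes "a \<in> M" "b \<in> M" shows "a \<otimes> b = b \<otimes> a"
  using assms(1) unfolding M_def
proof (induction a rule: generate.induct)
  case one then show ?case using assms by simp
next
  case (incl h)
  then show ?case using M_comm_gen assms by auto
next
  case (inv h)
  then obtain s where s: "s \<in> carrier G" "h = cj G s x" by blast
  then show ?case using M_comm_gen[OF assms(2) s(1)] comm_inv assms xc by simp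
next
  case (eng h1 h2)
  have c: "h1 \<in> carrier G" "h2 \<in> carrier G" "b \<in> carrier G" using eng assms by (auto simp: M_def[symmetric])
  have "h1 \<otimes> h2 \<otimes> b = h1 \<otimes> (b \<otimes> h2)" using eng c by (simp add: m_assoc)
  also have "\<dots> = b \<otimes> (h1 \<otimes> h2)" using eng c by (simp add: m_assoc[symmetric])
  finally show ?case .
qed

lemma M_lcomm: "a \<in> M \<Longrightarrow> b \<in> M \<Longrightarrow> c \<in> M \<Longrightarrow> a \<otimes> (b \<otimes> c) = b \<otimes> (a \<otimes> c)"
proof -
  assume a: "a \<in> M" "b \<in> M" "c \<in> M"
  have "a \<otimes> (b \<otimes> c) = (a \<otimes> b) \<otimes> c" using a by (simp add: m_assoc)
  also have "\<dots> = (b \<otimes> a) \<otimes> c" using M_comm[OF a(1,2)] by simp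
  also have "\<dots> = b \<otimes> (a \<otimes> c)" using a by (simp add: m_assoc)
  finally show ?thesis .
qed


lemma M_inv_sq: "a \<in> M \<Longrightarrow> inv a = a \<otimes> a"
  by (metis M_carrier M_cube inv_equality m_closed)
lemma M_c3: "a \<in> M \<Longrightarrow> a \<otimes> (a \<otimes> a) = \<one>"
  using M_cube by (simp add: m_assoc)
lemma M_c3': "a \<in> M \<Longrightarrow> w \<in> carrier G \<Longrightarrow> a \<otimes> (a \<otimes> (a \<otimes> w)) = w"
proof -
  assume a: "a \<in> M" "w \<in> carrier G"
  have "a \<otimes> (a \<otimes> (a \<otimes> w)) = (a \<otimes> a \<otimes> a) \<otimes> w" using a by (simp add: m_assoc)
  then show ?thesis using M_cube a by simp
qed

lemmas ACM = m_assoc M_comm M_lcomm M_inv_sq M_c3 M_c3'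

definition D where "D g m = comm G m g"

lemma D_eq: "m \<in> carrier G \<Longrightarrow> g \<in> carrier G \<Longrightarrow> D g m = inv m \<otimes> cj G g m"
  by (simp add: D_def comm_def cj_def m_assoc)

lemma D_in[simp]: "m \<in> M \<Longrightarrow> g \<in> carrier G \<Longrightarrow> D g m \<in> M"
  by (simp add: D_eq)

lemma D_one[simp]: "g \<in> carrier G \<Longrightarrow> D g \<one> = \<one>"
  by (simp add: D_eq)

lemma D_mult: "a \<in> M \<Longrightarrow> b \<in> M \<Longrightarrow> g \<in> carrier G \<Longrightarrow> D g (a \<otimes> b) = D g a \<otimes> D g b"
  by (simp add: D_eq cj_mult ACM)

lemma D_inv: assumes a: "a \<in> M" and g: "g \<in> carrier G" shows "D g (inv a) = inv (D g a)"
proof -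
  have "D g (inv a) \<otimes> D g a = D g (inv a \<otimes> a)" using a g by (intro D_mult[symmetric]) auto
  also have "\<dots> = \<one>" using a g by simp
  finally show ?thesis using a g by (intro inv_equality[symmetric]) auto
qed


lemma DD: assumes m: "m \<in> M" and g: "g \<in> carrier G" shows "D g (D g m) = \<one>"
proof -
  have mS: "m \<in> S3" using m M_sub_S3 by blast
  have "m \<otimes> cj G g m \<otimes> cj G g (cj G g m) = \<one>" by (rule F1[OF mS g])
  then have "inv (cj G g (cj G g m)) = m \<otimes> cj G g m"
    using m g by (intro inv_equality) auto
  then have e: "cj G g (cj G g m) = inv (m \<otimes> cj G g m)"
    using m g by (metis M_carrier cj_closed inv_inv)
  have "D g (D g m) = inv (inv m \<otimes> cj G g m) \<otimes> (inv (cj G g m) \<otimes> cj G g (cj G g m))"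
    using m g by (simp add: D_eq cj_mult cj_inv)
  also have "\<dots> = \<one>" unfolding e using m g by (simp add: ACM)
  finally show ?thesis .
qed

lemma Dcomp: assumes m: "m \<in> M" and g: "g \<in> carrier G" and h: "h \<in> carrier G"
  shows "D (g \<otimes> h) m = D g m \<otimes> D h m \<otimes> D h (D g m)"
  using m g h by (simp add: D_eq cj_mult cj_inv cj_cj ACM)

lemma Dinv: assumes m: "m \<in> M" and h: "h \<in> carrier G"
  shows "D (inv h) m = inv (D h m)"
proof -
  define z where "z = cj G (inv h) m"
  have zM: "z \<in> M" using m h by (simp add: z_def)
  have zS: "z \<in> S3" using zM M_sub_S3 by blast
  have cz: "cj G h z = m" using m h by (simp add: z_def cj_cj)
  have "z \<otimes> m \<otimes> cj G h m = \<one>" using F1[OF zS h] by (simp add: cz)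
  then have e: "z = inv (m \<otimes> cj G h m)"
    using m h zM by (intro inv_equality[symmetric]) (auto simp: m_assoc)
  show ?thesis using m h by (simp add: D_eq z_def[symmetric] e ACM)
qed


lemmas DS = Dcomp Dinv D_mult D_inv DD

lemma aba: assumes m: "m \<in> M" and g: "g \<in> carrier G" and h: "h \<in> carrier G"
  shows "D g (D h (D g m)) = \<one>"
proof -
  define x2 where "x2 = D g (D h (D g m))"
  define x5 where "x5 = D h x2"
  have c: "x2 \<in> M" "x5 \<in> M" using m g h by (auto simp: x2_def x5_def)
  have "x2 \<otimes> x5 = D (g \<otimes> h) (D (g \<otimes> h) (D g m))"
    using m g h by (simp add: x2_def x5_def DS ACM)
  then have P1: "x2 \<otimes> x5 = \<one>" using m g h by (simp add: DD)
  have "inv x2 \<otimes> x5 = D (g \<otimes> inv h) (D (g \<otimes> inv h) (D g m))"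
    using m g h by (simp add: x2_def x5_def DS ACM)
  then have P2: "inv x2 \<otimes> x5 = \<one>" using m g h by (simp add: DD)
  have "x2 = (inv x2 \<otimes> x5) \<otimes> inv (x2 \<otimes> x5)" using c by (simp add: ACM)
  also have "\<dots> = \<one>" unfolding P1 P2 by simp
  finally show ?thesis by (simp add: x2_def)
qed

lemma swap2: assumes m: "m \<in> M" and g: "g \<in> carrier G" and h: "h \<in> carrier G"
  shows "D h (D g m) \<otimes> D g (D h m) = \<one>"
proof -
  define A where "A = D (g \<otimes> h) (D (g \<otimes> h) m)"
  define B where "B = D (g \<otimes> inv h) (D (g \<otimes> inv h) m)"
  have A1: "A = \<one>" and B1: "B = \<one>" using m g h by (simp_all add: A_def B_def DD)
  have "D h (D g m) \<otimes> D g (D h m) = (A \<otimes> inv B) \<otimes> (A \<otimes> inv B)"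
    using m g h by (simp add: A_def B_def DS aba ACM)
  also have "\<dots> = \<one>" unfolding A1 B1 by simp
  finally show ?thesis .
qed


lemma comm_D: "comm G m g = D g m" by (simp add: D_def)

lemma lc_Cons: "lcomm G m (y # ys) = lcomm G (D y m) ys"
  by (simp add: lcomm_def comm_D)
lemma lc_Nil[simp]: "lcomm G m [] = m"
  by (simp add: lcomm_def)
lemma lc_append: "lcomm G m (ys @ zs) = lcomm G (lcomm G m ys) zs"
  by (simp add: lcomm_def)

lemma lc_in: "m \<in> M \<Longrightarrow> set ys \<subseteq> carrier G \<Longrightarrow> lcomm G m ys \<in> M"
  by (induction ys arbitrary: m) (auto simp: lc_Cons)

lemma lc_inv: "m \<in> M \<Longrightarrow> set ys \<subseteq> carrier G \<Longrightarrow> lcomm G (inv m) ys = inv (lcomm G m ys)"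
  by (induction ys arbitrary: m) (auto simp: lc_Cons D_inv)

lemma lc_swap: assumes m: "m \<in> M" and s: "set (A @ a # b # C) \<subseteq> carrier G"
  shows "lcomm G m (A @ a # b # C) = inv (lcomm G m (A @ b # a # C))"
proof -
  define m' where "m' = lcomm G m A"
  have m': "m' \<in> M" using lc_in m s by (auto simp: m'_def)
  have ab: "a \<in> carrier G" "b \<in> carrier G" and Cc: "set C \<subseteq> carrier G" using s by auto
  have e: "D b (D a m') = inv (D a (D b m'))"
    using swap2[OF m' ab] m' ab by (intro inv_equality[symmetric]) (auto simp: inv_comm)
  have "lcomm G m (A @ a # b # C) = lcomm G (D b (D a m')) C"
    by (simp add: lc_append lc_Cons m'_def)
  also have "\<dots> = inv (lcomm G (D a (D b m')) C)" unfolding e using m' ab Cc by (simp add: lc_inv)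
  also have "\<dots> = inv (lcomm G m (A @ b # a # C))"
    by (simp add: lc_append lc_Cons m'_def)
  finally show ?thesis .
qed

definition eps :: "nat \<Rightarrow> 'a \<Rightarrow> 'a" where "eps n z = (if even n then z else inv z)"

lemma lc_move: assumes m: "m \<in> M"
  shows "set (A @ a # B @ C) \<subseteq> carrier G \<Longrightarrow>
    lcomm G m (A @ a # B @ C) = eps (length B) (lcomm G m (A @ B @ a # C))"
proof (induction B arbitrary: A)
  case Nil then show ?case by (simp add: eps_def)
next
  case (Cons b B)
  have "lcomm G m (A @ a # (b # B) @ C) = inv (lcomm G m (A @ b # a # B @ C))"
    using lc_swap[OF m, of A a b "B @ C"] Cons.prems by simp
  also have "lcomm G m (A @ b # a # B @ C) = lcomm G m ((A @ [b]) @ a # B @ C)" by simp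
  also have "\<dots> = eps (length B) (lcomm G m ((A @ [b]) @ B @ a # C))"
    using Cons.IH[of "A @ [b]"] Cons.prems by simp
  finally have "lcomm G m (A @ a # (b # B) @ C) = inv (eps (length B) (lcomm G m (A @ (b # B) @ a # C)))"
    by simp
  moreover have "lcomm G m (A @ (b # B) @ a # C) \<in> carrier G"
    using lc_in[OF m] Cons.prems by (intro M_carrier) auto
  ultimately show ?case by (simp add: eps_def)
qed

lemma lc_transp: assumes m: "m \<in> M" and s: "set (A @ a # B @ b # C) \<subseteq> carrier G"
  shows "lcomm G m (A @ b # B @ a # C) = inv (lcomm G m (A @ a # B @ b # C))"
proof -
  define Z where "Z = lcomm G m ((A @ B) @ b # a # C)"
  have Zc: "Z \<in> carrier G" using lc_in[OF m] s by (intro M_carrier) (auto simp: Z_def)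
  have 1: "lcomm G m (A @ a # B @ b # C) = eps (length B) (lcomm G m (A @ B @ a # b # C))"
    using lc_move[OF m, of A a B "b # C"] s by simp
  have 2: "lcomm G m (A @ B @ a # b # C) = inv Z"
    using lc_swap[OF m, of "A @ B" a b C] s by (simp add: Z_def)
  have 3: "lcomm G m (A @ b # B @ a # C) = eps (length B) Z"
    using lc_move[OF m, of A b B "a # C"] s by (simp add: Z_def)
  show ?thesis unfolding 1 2 3 using Zc by (simp add: eps_def)
qed


lemma upt_split2: "i \<le> j \<Longrightarrow> j \<le> k \<Longrightarrow> [i..<k] = [i..<j] @ [j..<k]"
  using upt_add_eq_append[of i j "k - j"] by simp

lemma upt_split: assumes "1 \<le> i" "i < j" "j \<le> k"
  shows "[1..<k+1] = [1..<i] @ i # [Suc i..<j] @ j # [Suc j..<k+1]"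
proof -
  have "[1..<k+1] = [1..<i] @ [i..<k+1]" using assms by (intro upt_split2) auto
  also have "[i..<k+1] = [i..<j] @ [j..<k+1]" using assms by (intro upt_split2) auto
  also have "[i..<j] = i # [Suc i..<j]" using assms by (simp add: upt_conv_Cons)
  also have "[j..<k+1] = j # [Suc j..<k+1]" using assms by (simp add: upt_conv_Cons)
  finally show ?thesis by simp
qed

lemma transp_lists:
  fixes g :: "nat \<Rightarrow> 'a" and p :: "nat \<Rightarrow> nat"
  assumes p: "p permutes {1..k}" and ab: "a \<in> {1..k}" "b \<in> {1..k}"
    and lt: "inv_into UNIV p a < inv_into UNIV p b"
    and gc: "\<And>i. i \<in> {1..k} \<Longrightarrow> g i \<in> carrier G" and m: "m \<in> M"
  shows "lcomm G m (map (\<lambda>i. g ((Transposition.transpose a b \<circ> p) i)) [1..<k+1])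
       = inv (lcomm G m (map (\<lambda>i. g (p i)) [1..<k+1]))"
proof -
  define i where "i = inv_into UNIV p a"
  define j where "j = inv_into UNIV p b"
  have pi: "p i = a" and pj: "p j = b" using permutes_inverses(1)[OF p] by (auto simp: i_def j_def)
  have ik: "i \<in> {1..k}" and jk: "j \<in> {1..k}"
    using permutes_in_image[OF permutes_inv[OF p]] ab by (auto simp: i_def j_def)
  have ij: "i < j" using lt by (simp add: i_def j_def)
  have other: "Transposition.transpose a b (p l) = p l" if "l \<noteq> i" "l \<noteq> j" for l
  proof -
    have "p l \<noteq> a" using that permutes_inverses(2)[OF p, of l] by (auto simp: i_def)
    moreover have "p l \<noteq> b" using that permutes_inverses(2)[OF p, of l] by (auto simp: j_def)
    ultimately show ?thesis by simp
  qed
  define f where "f = (\<lambda>l. g (p l))"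
  define A where "A = map f [1..<i]"
  define B where "B = map f [Suc i..<j]"
  define C where "C = map f [Suc j..<k+1]"
  have sp: "[1..<k+1] = [1..<i] @ i # [Suc i..<j] @ j # [Suc j..<k+1]"
    using ik jk ij by (intro upt_split) auto
  have L1: "map (\<lambda>i. g (p i)) [1..<k+1] = A @ g a # B @ g b # C"
    unfolding sp by (simp add: A_def B_def C_def f_def pi pj)
  have L2: "map (\<lambda>i. g ((Transposition.transpose a b \<circ> p) i)) [1..<k+1] = A @ g b # B @ g a # C"
    unfolding sp using ij by (auto simp: A_def B_def C_def f_def pi pj other)
  have fc: "f l \<in> carrier G" if "l \<in> {1..k}" for l
    using gc permutes_in_image[OF p] that by (simp add: f_def)
  have "set (A @ g a # B @ g b # C) \<subseteq> carrier G"
    using ik jk ij ab gc by (auto simp: A_def B_def C_def intro!: fc)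
  then show ?thesis unfolding L1 L2 by (rule lc_transp[OF m])
qed

lemma perm_main:
  fixes g :: "nat \<Rightarrow> 'a" and p :: "nat \<Rightarrow> nat"
  assumes p: "p permutes {1..k}"
    and gc: "\<And>i. i \<in> {1..k} \<Longrightarrow> g i \<in> carrier G" and m: "m \<in> M"
  shows "lcomm G m (map (\<lambda>i. g (p i)) [1..<k+1])
       = (if evenperm p then lcomm G m (map g [1..<k+1]) else inv (lcomm G m (map g [1..<k+1])))"
  using p finite_atLeastAtMost
proof (induction p rule: permutes_induct)
  case id then show ?case by simp
next
  case (swap a b p)
  have pp: "p permutes {1..k}" and a: "a \<in> {1..k}" and b: "b \<in> {1..k}" and abn: "a \<noteq> b"
    and IH: "lcomm G m (map (\<lambda>i. g (p i)) [1..<k+1])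
       = (if evenperm p then lcomm G m (map g [1..<k+1]) else inv (lcomm G m (map g [1..<k+1])))"
    using swap by blast+
  define Z where "Z = lcomm G m (map g [1..<k+1])"
  have Zc: "Z \<in> carrier G" unfolding Z_def using gc by (intro M_carrier lc_in[OF m]) auto
  have ev: "evenperm (Transposition.transpose a b \<circ> p) = (\<not> evenperm p)"
    using evenperm_comp[OF permutation_swap_id, of p a b] evenperm_swap[of a b] abn pp
      permutation_permutes by blast
  have ne: "inv_into UNIV p a \<noteq> inv_into UNIV p b" using abn permutes_inverses(1)[OF pp] by metis
  have T: "lcomm G m (map (\<lambda>i. g ((Transposition.transpose a b \<circ> p) i)) [1..<k+1])
       = inv (lcomm G m (map (\<lambda>i. g (p i)) [1..<k+1]))"
  proof (cases "inv_into UNIV p a < inv_into UNIV p b")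
    case True then show ?thesis by (intro transp_lists[OF pp a b]) (auto simp: gc m)
  next
    case False
    then have "inv_into UNIV p b < inv_into UNIV p a" using ne by simp
    then have "lcomm G m (map (\<lambda>i. g ((Transposition.transpose b a \<circ> p) i)) [1..<k+1]) = inv (lcomm G m (map (\<lambda>i. g (p i)) [1..<k+1]))"
      by (intro transp_lists[OF pp b a]) (auto simp: gc m)
    then show ?thesis by (simp add: transpose_commute)
  qed
  show ?case unfolding T IH ev using Zc by (auto simp: Z_def)
qed

end

lemma (in semi3) Omega1_S3: "Omega1 G = S3"
proof -
  have "Omega1 G = generate G S3" by (simp add: Omega1_def S3_def)
  also have "\<dots> = S3"
  proof
    show "generate G S3 \<subseteq> S3" by (rule generate_subgroup_incl[OF subset_refl S3_sub])
    show "S3 \<subseteq> generate G S3" by (auto intro: generate.incl)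
  qed
  finally show ?thesis .
qed

theorem lemma3p2:
  fixes G :: "('a, 'b) monoid_scheme" and x :: 'a and k :: nat
    and g :: "nat \<Rightarrow> 'a" and \<sigma> :: "nat \<Rightarrow> nat"
  assumes "p_group 3 G"
    and "semi_3_abelian G"
    and "x \<in> Omega1 G"
    and "k \<ge> 1"
    and "\<And>i. i \<in> {1..k} \<Longrightarrow> g i \<in> carrier G"
    and "\<sigma> permutes {1..k}"
  shows "lcomm G x (map (\<lambda>i. g (\<sigma> i)) [1..<k+1]) =
         lcomm G x (map g [1..<k+1]) [^]\<^bsub>G\<^esub> ((2::nat) ^ (if evenperm \<sigma> then 0 else 1))"
proof -
  have grp: "group G" using assms(1) by (simp add: p_group_def)
  interpret semi3 G using grp assms(2) by (simp add: semi3_def semi3_axioms_def)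
  have xS: "x \<in> S3" using assms(3) Omega1_S3 by simp
  interpret M3 G x by unfold_locales (rule xS)
  define Z where "Z = lcomm G x (map g [1..<k+1])"
  have ZM: "Z \<in> M" unfolding Z_def using assms(5) by (intro lc_in x_M) auto
  have e: "lcomm G x (map (\<lambda>i. g (\<sigma> i)) [1..<k+1]) = (if evenperm \<sigma> then Z else inv\<^bsub>G\<^esub> Z)"
    unfolding Z_def using perm_main[OF assms(6) assms(5) x_M] .
  show ?thesis
  proof (cases "evenperm \<sigma>")
    case True then show ?thesis using e ZM by (simp add: Z_def)
  next
    case False
    have "Z [^]\<^bsub>G\<^esub> (2::nat) = Z \<otimes>\<^bsub>G\<^esub> Z" using ZM by (simp add: numeral_2_eq_2)
    then show ?thesis using e ZM False M_inv_sq by (simp add: Z_def)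
  qed
qed

end
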